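(* For every $h\in[H]$, with $\kappa=1/K$ and some $\beta=O(L/K)$, there is a matrix $A\in\mathbb R^{|\mathcal M|\times|\mathcal M|}$ (indexed by models) with $\frac1K\mathcal E_B(M,M',h)\le A(M,M')\le\mathcal W_F(M,M',h)$ for all $M,M'\in\mathcal M$ and $\mathrm{rank}(A,\beta)\le L_h/|\mathcal O|$; that is, the witness rank defined with $\mathcal W_F$ satisfies $\mathsf W(1/K,\beta,\mathcal M,\mathcal F,h)\le L_h/|\mathcal O|$.
   Context: Factored MDP setting: $\mathcal O$ finite, $\mathcal X=[H]\times\mathcal O^d$ layered by time, $|\mathcal A|=K$; known parent sets $\mathrm{pa}_i\subseteq[d]$; transitions $P(x'|x,a)=\prod_{i=1}^dP^{(i)}[x'[i]\mid x[\mathrm{pa}_i],a,h]$; known reward $R^\star$ shared by all models, rewards in $[0,1]$ with total reward $\le1$; $\mathcal M$ is the set of all models with reward $R^\star$ and transitions factorizing with these parents, true model $M^\star\in\mathcal M$. $L=\sum_{i=1}^dHK|\mathcal O|^{1+|\mathrm{pa}_i|}$, $L_h=\sum_{i=1}^dK|\mathcal O|^{1+|\mathrm{pa}_i|}$. For model $M$: $V_M,\pi_M$ its optimal value function and greedy policy; $x_h\sim\pi$ the step-$h$ context running $\pi$ in the true MDP; $(r,x')\sim M_h$: $r\sim R^\star(x_h,a_h),x'\sim P(x_h,a_h)$. $\mathcal E_B(M,M',h)=\mathbb E_{x_h\sim\pi_M,a_h\sim\pi_{M'}}[\mathbb E_{M'_h}[r+V_{M'}(x')]-\mathbb E_{M^\star_h}[r+V_{M'}(x')]]$.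 $\mathcal F=\{g_1+\dots+g_d:g_i\in\mathcal G_i\}$, $\mathcal G_i$ all $\{-1,1\}$-valued functions of $(x,a,r,x')$ depending only on $(x[\mathrm{pa}_i],a,h,x'[i])$. $\mathcal W_F(M,M',h)=\max_{f\in\mathcal F}\mathbb E_{x_h\sim\pi_M,a_h\sim U(\mathcal A)}[\mathbb E_{M'_h}f-\mathbb E_{M^\star_h}f]$. For a matrix $B$, $\mathrm{rank}(B,\beta)$ is the least $k$ with $B=UV^\top$, $U,V$ having $k$ columns and $\|u_i\|_2\|v_j\|_2\le\beta$ for all rows $u_i,v_j$. *)

theory Defs
  imports "HOL-Probability.Probability"
begin

text \<open>Observations and actions are finite sets of naturals,
  feature indices are 0..<d, time steps are 1..H. A context at step h is the pair
  of h and an observation vector x, represented as a function nat => nat that lies in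
  PiE {..<d} (\<lambda>_. Obs) (value undefined outside {..<d}).\<close>

record fsetting =
  Obs :: "nat set"
  Act :: "nat set"
  nfeat :: nat
  Hor :: nat
  pa :: "nat \<Rightarrow> nat set"
  Rew :: "nat \<Rightarrow> (nat \<Rightarrow> nat) \<Rightarrow> nat \<Rightarrow> real pmf"
  init :: "(nat \<Rightarrow> nat) pmf"

type_synonym state = "nat \<Rightarrow> nat"

text \<open>A model is given by its factor transition kernels: M h i z a is the law of x'[i]
  given the parent values z = x[pa_i] (a restricted vector), action a, time h.\<close>
type_synonym model = "nat \<Rightarrow> nat \<Rightarrow> state \<Rightarrow> nat \<Rightarrow> nat pmf"

definition states :: "fsetting \<Rightarrow> state set" where
  "states E = PiE {..<nfeat E} (\<lambda>_. Obs E)"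

definition valid_setting :: "fsetting \<Rightarrow> bool" where
  "valid_setting E \<longleftrightarrow>
     finite (Obs E) \<and> Obs E \<noteq> {} \<and> finite (Act E) \<and> Act E \<noteq> {} \<and>
     (\<forall>i<nfeat E. pa E i \<subseteq> {..<nfeat E}) \<and>
     set_pmf (init E) \<subseteq> states E \<and>
     (\<forall>h x a. set_pmf (Rew E h x a) \<subseteq> {0..1}) \<and>
     (\<forall>xs as rs. (\<forall>h\<in>{1..Hor E}. xs h \<in> states E \<and> as h \<in> Act E \<and>
                    rs h \<in> set_pmf (Rew E h (xs h) (as h)))
                 \<longrightarrow> (\<Sum>h=1..Hor E. rs h) \<le> 1)"

text \<open>The model class: all factored transition kernels with values in Obs
  (the reward R* is shared and fixed by the setting).\<close>
definition models :: "fsetting \<Rightarrow> model set" where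
  "models E = {M. \<forall>h i z a. set_pmf (M h i z a) \<subseteq> Obs E}"

definition trans :: "fsetting \<Rightarrow> model \<Rightarrow> nat \<Rightarrow> state \<Rightarrow> nat \<Rightarrow> state pmf" where
  "trans E M h x a = Pi_pmf {..<nfeat E} undefined (\<lambda>i. M h i (restrict x (pa E i)) a)"

definition Er :: "fsetting \<Rightarrow> nat \<Rightarrow> state \<Rightarrow> nat \<Rightarrow> real" where
  "Er E h x a = measure_pmf.expectation (Rew E h x a) (\<lambda>r. r)"

text \<open>Optimal value with n steps remaining (the current step is H + 1 - n).\<close>
fun Vn :: "fsetting \<Rightarrow> model \<Rightarrow> nat \<Rightarrow> state \<Rightarrow> real" where
  "Vn E M 0 x = 0"
| "Vn E M (Suc n) x = Max ((\<lambda>a. Er E (Hor E - n) x a +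
       measure_pmf.expectation (trans E M (Hor E - n) x a) (Vn E M n)) ` Act E)"

text \<open>Optimal value V_M at step h (h in 1..H+1; V at step H+1 is 0).\<close>
definition V :: "fsetting \<Rightarrow> model \<Rightarrow> nat \<Rightarrow> state \<Rightarrow> real" where
  "V E M h x = Vn E M (Hor E + 1 - h) x"

definition Q :: "fsetting \<Rightarrow> model \<Rightarrow> nat \<Rightarrow> state \<Rightarrow> nat \<Rightarrow> real" where
  "Q E M h x a = Er E h x a + measure_pmf.expectation (trans E M h x a) (V E M (h + 1))"

definition pol :: "fsetting \<Rightarrow> model \<Rightarrow> nat \<Rightarrow> state \<Rightarrow> nat" where
  "pol E M h x = (LEAST a. a \<in> Act E \<and> (\<forall>b\<in>Act E. Q E M h x b \<le> Q E M h x a))"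

text \<open>Law of the step-h context when running policy pi in the true MDP Ms.\<close>
fun roll :: "fsetting \<Rightarrow> model \<Rightarrow> (nat \<Rightarrow> state \<Rightarrow> nat) \<Rightarrow> nat \<Rightarrow> state pmf" where
  "roll E Ms \<pi> 0 = init E"
| "roll E Ms \<pi> (Suc h) = (if h = 0 then init E
     else bind_pmf (roll E Ms \<pi> h) (\<lambda>x. trans E Ms h x (\<pi> h x)))"

definition Estep :: "fsetting \<Rightarrow> model \<Rightarrow> nat \<Rightarrow> state \<Rightarrow> nat
                     \<Rightarrow> (nat \<Rightarrow> state \<Rightarrow> nat \<Rightarrow> real \<Rightarrow> state \<Rightarrow> real) \<Rightarrow> real" where
  "Estep E M h x a f = measure_pmf.expectation (Rew E h x a)
      (\<lambda>r. measure_pmf.expectation (trans E M h x a) (\<lambda>x'. f h x a r x'))"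

definition bellman_err :: "fsetting \<Rightarrow> model \<Rightarrow> model \<Rightarrow> model \<Rightarrow> nat \<Rightarrow> real" where
  "bellman_err E Ms M M' h = measure_pmf.expectation (roll E Ms (pol E M) h)
     (\<lambda>x. let a = pol E M' h x;
              g = (\<lambda>h x a r x'. r + V E M' (h + 1) x')
          in Estep E M' h x a g - Estep E Ms h x a g)"

definition Gcls :: "fsetting \<Rightarrow> nat \<Rightarrow> (nat \<Rightarrow> state \<Rightarrow> nat \<Rightarrow> real \<Rightarrow> state \<Rightarrow> real) set" where
  "Gcls E i = {g. (\<forall>h x a r x'. g h x a r x' \<in> {-1, 1}) \<and>
      (\<exists>\<phi>. \<forall>h x a r x'. g h x a r x' = \<phi> (restrict x (pa E i)) a h (x' i))}"

definition Fcls :: "fsetting \<Rightarrow> (nat \<Rightarrow> state \<Rightarrow> nat \<Rightarrow> real \<Rightarrow> state \<Rightarrow> real) set" where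
  "Fcls E = {f. \<exists>g. (\<forall>i<nfeat E. g i \<in> Gcls E i) \<and>
      f = (\<lambda>h x a r x'. \<Sum>i<nfeat E. g i h x a r x')}"

text \<open>Witnessed model misfit W_F(M, M', h) (a maximum over F, written as a supremum).\<close>
definition witness_misfit :: "fsetting \<Rightarrow> model \<Rightarrow> model \<Rightarrow> model \<Rightarrow> nat \<Rightarrow> real" where
  "witness_misfit E Ms M M' h = (SUP f\<in>Fcls E. measure_pmf.expectation (roll E Ms (pol E M) h)
     (\<lambda>x. measure_pmf.expectation (pmf_of_set (Act E))
        (\<lambda>a. Estep E M' h x a f - Estep E Ms h x a f)))"

definition beta_factorization :: "(model \<Rightarrow> model \<Rightarrow> real) \<Rightarrow> model set \<Rightarrow> nat \<Rightarrow> real \<Rightarrow> bool" where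
  "beta_factorization A Ms k \<beta> \<longleftrightarrow>
     (\<exists>u v :: model \<Rightarrow> nat \<Rightarrow> real. \<forall>M\<in>Ms. \<forall>M'\<in>Ms.
        A M M' = (\<Sum>j<k. u M j * v M' j) \<and>
        sqrt (\<Sum>j<k. (u M j)\<^sup>2) * sqrt (\<Sum>j<k. (v M' j)\<^sup>2) \<le> \<beta>)"

definition rank_le :: "(model \<Rightarrow> model \<Rightarrow> real) \<Rightarrow> model set \<Rightarrow> real \<Rightarrow> real \<Rightarrow> bool" where
  "rank_le A Ms \<beta> n \<longleftrightarrow> (\<exists>k. real k \<le> n \<and> beta_factorization A Ms k \<beta>)"

definition witness_rank_le :: "fsetting \<Rightarrow> model \<Rightarrow> real \<Rightarrow> real \<Rightarrow> nat \<Rightarrow> real \<Rightarrow> bool" where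
  "witness_rank_le E Ms \<kappa> \<beta> h n \<longleftrightarrow>
     (\<exists>A. (\<forall>M\<in>models E. \<forall>M'\<in>models E.
            \<kappa> * bellman_err E Ms M M' h \<le> A M M' \<and> A M M' \<le> witness_misfit E Ms M M' h) \<and>
          rank_le A (models E) \<beta> n)"

definition Ltot :: "fsetting \<Rightarrow> nat" where
  "Ltot E = (\<Sum>i<nfeat E. Hor E * card (Act E) * card (Obs E) ^ (1 + card (pa E i)))"

definition Lh :: "fsetting \<Rightarrow> nat" where
  "Lh E = (\<Sum>i<nfeat E. card (Act E) * card (Obs E) ^ (1 + card (pa E i)))"

end

theory Submission
  imports Defs
begin

lemma pmf_int_bound:
  fixes F :: "'a \<Rightarrow> real"
  assumes "\<And>x. x \<in> set_pmf p \<Longrightarrow> \<bar>F x\<bar> \<le> B"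
  shows "integrable (measure_pmf p) F"
  by (rule measure_pmf.integrable_const_bound[where B=B]) (auto simp: AE_measure_pmf_iff assms)

lemma pmf_le_bound:
  fixes F :: "'a \<Rightarrow> real"
  assumes "\<And>x. x \<in> set_pmf p \<Longrightarrow> F x \<le> B" "integrable (measure_pmf p) F"
  shows "measure_pmf.expectation p F \<le> B"
proof -
  have "measure_pmf.expectation p F \<le> measure_pmf.expectation p (\<lambda>_. B)"
    by (rule integral_mono_AE) (auto simp: assms AE_measure_pmf_iff)
  then show ?thesis by simp
qed

lemma pmf_abs_bound:
  fixes F :: "'a \<Rightarrow> real"
  assumes "\<And>x. x \<in> set_pmf p \<Longrightarrow> \<bar>F x\<bar> \<le> B"
  shows "\<bar>measure_pmf.expectation p F\<bar> \<le> B"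
proof -
  have int: "integrable (measure_pmf p) F" by (rule pmf_int_bound[OF assms])
  have 1: "measure_pmf.expectation p F \<le> B"
    by (rule pmf_le_bound) (use assms int in force)+
  have "measure_pmf.expectation p (\<lambda>x. - F x) \<le> B"
    by (rule pmf_le_bound) (use assms int in force)+
  then show ?thesis using 1 by simp
qed

lemma group_lemma:
  fixes w c :: "_ \<Rightarrow> real"
  assumes "finite S" "finite T" "g ` S \<subseteq> T"
  shows "(\<Sum>z\<in>T. (\<Sum>x\<in>{x\<in>S. g x = z}. w x) * c z) = (\<Sum>x\<in>S. w x * c (g x))"
proof -
  have "(\<Sum>x\<in>S. w x * c (g x)) = (\<Sum>z\<in>T. \<Sum>x\<in>{x\<in>S. g x = z}. w x * c (g x))"
    using sum.group[OF assms, of "\<lambda>x. w x * c (g x)"] by simp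
  also have "\<dots> = (\<Sum>z\<in>T. (\<Sum>x\<in>{x\<in>S. g x = z}. w x) * c z)"
    by (intro sum.cong refl) (auto simp: sum_distrib_right)
  finally show ?thesis by simp
qed

lemma PiE_dflt_undef: "PiE_dflt A undefined B = PiE A B"
  by (auto simp: PiE_dflt_def PiE_def extensional_def Pi_def)

lemma pi_marginal:
  fixes \<psi> :: "'b \<Rightarrow> real"
  assumes "finite I" "i \<in> I"
  shows "measure_pmf.expectation (Pi_pmf I dflt p) (\<lambda>f. \<psi> (f i)) = measure_pmf.expectation (p i) \<psi>"
proof -
  have "measure_pmf.expectation (Pi_pmf I dflt p) (\<lambda>f. \<psi> (f i)) =
        measure_pmf.expectation (map_pmf (\<lambda>f. f i) (Pi_pmf I dflt p)) \<psi>" by simp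
  also have "map_pmf (\<lambda>f. f i) (Pi_pmf I dflt p) = p i"
    using Pi_pmf_component[OF assms(1), of i dflt p] assms(2) by simp
  finally show ?thesis .
qed

lemma pi_support:
  assumes "finite I" "\<forall>j\<in>I. set_pmf (p j) \<subseteq> Ob"
  shows "set_pmf (Pi_pmf I dflt p) \<subseteq> PiE_dflt I dflt (\<lambda>_. Ob)"
proof
  fix f assume "f \<in> set_pmf (Pi_pmf I dflt p)"
  then have "f \<in> PiE_dflt I dflt (set_pmf \<circ> p)" using set_Pi_pmf_subset'[OF assms(1), of dflt p] by blast
  then show "f \<in> PiE_dflt I dflt (\<lambda>_. Ob)" using assms(2) by (auto simp: PiE_dflt_def)
qed

lemma pi_insert_exp:
  fixes \<phi> :: "('k \<Rightarrow> 'b) \<Rightarrow> real"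
  assumes "finite I" "i \<notin> I" "finite Ob" "\<forall>j\<in>insert i I. set_pmf (p j) \<subseteq> Ob"
  shows "measure_pmf.expectation (Pi_pmf (insert i I) dflt p) \<phi> =
         (\<Sum>y\<in>Ob. pmf (p i) y * measure_pmf.expectation (Pi_pmf I dflt p) (\<lambda>f. \<phi> (f(i:=y))))"
proof -
  have fin: "finite (set_pmf (Pi_pmf I dflt p))"
    by (rule finite_subset[OF pi_support[of I p Ob dflt]]) (use assms in auto)
  have "Pi_pmf (insert i I) dflt p = p i \<bind> (\<lambda>y. map_pmf (\<lambda>f. f(i:=y)) (Pi_pmf I dflt p))"
    using Pi_pmf_insert'[OF assms(1,2)] by (simp add: map_pmf_def)
  then have "measure_pmf.expectation (Pi_pmf (insert i I) dflt p) \<phi> =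
     (\<Sum>y\<in>Ob. pmf (p i) y *\<^sub>R measure_pmf.expectation (map_pmf (\<lambda>f. f(i:=y)) (Pi_pmf I dflt p)) \<phi>)"
    using assms fin by (simp add: pmf_expectation_bind[of Ob])
  then show ?thesis by simp
qed

lemma hybrid:
  fixes \<phi> :: "('k \<Rightarrow> 'b) \<Rightarrow> real"
  assumes "finite I" "finite Ob" "\<forall>i\<in>I. set_pmf (p i) \<subseteq> Ob \<and> set_pmf (q i) \<subseteq> Ob"
    "\<forall>f\<in>PiE_dflt I dflt (\<lambda>_. Ob). \<bar>\<phi> f\<bar> \<le> 1"
  shows "measure_pmf.expectation (Pi_pmf I dflt p) \<phi> - measure_pmf.expectation (Pi_pmf I dflt q) \<phi>
     \<le> (\<Sum>i\<in>I. \<Sum>y\<in>Ob. \<bar>pmf (p i) y - pmf (q i) y\<bar>)"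
  using assms(1,3,4)
proof (induction I arbitrary: \<phi> rule: finite_induct)
  case empty
  then show ?case by simp
next
  case (insert i I)
  define Gp where "Gp y = measure_pmf.expectation (Pi_pmf I dflt p) (\<lambda>f. \<phi> (f(i:=y)))" for y
  define Gq where "Gq y = measure_pmf.expectation (Pi_pmf I dflt q) (\<lambda>f. \<phi> (f(i:=y)))" for y
  define DI where "DI = (\<Sum>i\<in>I. \<Sum>y\<in>Ob. \<bar>pmf (p i) y - pmf (q i) y\<bar>)"
  have ep: "measure_pmf.expectation (Pi_pmf (insert i I) dflt p) \<phi> = (\<Sum>y\<in>Ob. pmf (p i) y * Gp y)"
    unfolding Gp_def by (rule pi_insert_exp) (use insert assms(2) in auto)
  have eq: "measure_pmf.expectation (Pi_pmf (insert i I) dflt q) \<phi> = (\<Sum>y\<in>Ob. pmf (q i) y * Gq y)"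
    unfolding Gq_def by (rule pi_insert_exp) (use insert assms(2) in auto)
  have upd: "f(i:=y) \<in> PiE_dflt (insert i I) dflt (\<lambda>_. Ob)" if "f \<in> PiE_dflt I dflt (\<lambda>_. Ob)" "y \<in> Ob" for f y
    using that insert.hyps(2) by (auto simp: PiE_dflt_def)
  have Gpb: "\<bar>Gp y\<bar> \<le> 1" if "y \<in> Ob" for y
    unfolding Gp_def
  proof (rule pmf_abs_bound)
    fix f assume "f \<in> set_pmf (Pi_pmf I dflt p)"
    then have "f \<in> PiE_dflt I dflt (\<lambda>_. Ob)" using pi_support[of I p Ob dflt] insert by auto
    then show "\<bar>\<phi> (f(i := y))\<bar> \<le> 1" using upd that insert.prems(2) by blast
  qed
  have Gd: "Gp y - Gq y \<le> DI" if "y \<in> Ob" for y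
    unfolding Gp_def Gq_def DI_def
  proof (rule insert.IH)
    show "\<forall>i\<in>I. set_pmf (p i) \<subseteq> Ob \<and> set_pmf (q i) \<subseteq> Ob" using insert.prems(1) by simp
    show "\<forall>f\<in>PiE_dflt I dflt (\<lambda>_. Ob). \<bar>\<phi> (f(i:=y))\<bar> \<le> 1" using insert.prems(2) upd that by blast
  qed
  have DI0: "DI \<ge> 0" unfolding DI_def by (intro sum_nonneg) auto
  have "(\<Sum>y\<in>Ob. pmf (p i) y * Gp y) - (\<Sum>y\<in>Ob. pmf (q i) y * Gq y)
      = (\<Sum>y\<in>Ob. (pmf (p i) y - pmf (q i) y) * Gp y) + (\<Sum>y\<in>Ob. pmf (q i) y * (Gp y - Gq y))"
    by (simp add: sum_subtractf[symmetric] sum.distrib[symmetric] algebra_simps)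
  also have "\<dots> \<le> (\<Sum>y\<in>Ob. \<bar>pmf (p i) y - pmf (q i) y\<bar>) + (\<Sum>y\<in>Ob. pmf (q i) y * DI)"
  proof (intro add_mono sum_mono)
    fix y assume y: "y \<in> Ob"
    have "(pmf (p i) y - pmf (q i) y) * Gp y \<le> \<bar>(pmf (p i) y - pmf (q i) y) * Gp y\<bar>" by simp
    also have "\<dots> \<le> \<bar>pmf (p i) y - pmf (q i) y\<bar> * 1"
      unfolding abs_mult by (intro mult_left_mono Gpb y) simp
    finally show "(pmf (p i) y - pmf (q i) y) * Gp y \<le> \<bar>pmf (p i) y - pmf (q i) y\<bar>" by simp
    show "pmf (q i) y * (Gp y - Gq y) \<le> pmf (q i) y * DI"
      by (intro mult_left_mono Gd y) simp
  qed
  also have "(\<Sum>y\<in>Ob. pmf (q i) y * DI) = DI"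
    using sum_pmf_eq_1[OF assms(2), of "q i"] insert.prems(1)
    by (simp add: sum_distrib_right[symmetric])
  finally show ?case using ep eq insert.hyps unfolding DI_def by simp
qed

lemma valid_basic:
  assumes "valid_setting E"
  shows "finite (Obs E)" "Obs E \<noteq> {}" "finite (Act E)" "Act E \<noteq> {}"
    "\<And>i. i < nfeat E \<Longrightarrow> pa E i \<subseteq> {..<nfeat E}" "set_pmf (init E) \<subseteq> states E"
    "\<And>h x a. set_pmf (Rew E h x a) \<subseteq> {0..1}"
  using assms unfolding valid_setting_def by auto

lemma states_finite: "valid_setting E \<Longrightarrow> finite (states E)"
  unfolding states_def by (intro finite_PiE) (auto dest: valid_basic(1))

lemma states_ne: "valid_setting E \<Longrightarrow> states E \<noteq> {}"
  unfolding states_def using valid_basic(2) by (simp add: PiE_eq_empty_iff)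

lemma trans_support:
  assumes "M \<in> models E"
  shows "set_pmf (trans E M h x a) \<subseteq> states E"
proof -
  have "\<forall>j\<in>{..<nfeat E}. set_pmf (M h j (restrict x (pa E j)) a) \<subseteq> Obs E"
    using assms by (simp add: models_def)
  then have "set_pmf (trans E M h x a) \<subseteq> PiE_dflt {..<nfeat E} undefined (\<lambda>_. Obs E)"
    unfolding trans_def by (rule pi_support[rotated]) simp
  then show ?thesis unfolding states_def PiE_dflt_undef .
qed

lemma trans_finite:
  assumes "valid_setting E" "M \<in> models E"
  shows "finite (set_pmf (trans E M h x a))"
  by (rule finite_subset[OF trans_support[OF assms(2)] states_finite[OF assms(1)]])

lemma roll_support:
  assumes "valid_setting E" "Ms \<in> models E"
  shows "set_pmf (roll E Ms \<pi> h) \<subseteq> states E"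
proof (induction h)
  case 0
  then show ?case using valid_basic(6)[OF assms(1)] by simp
next
  case (Suc h)
  show ?case
  proof (cases "h = 0")
    case True
    then show ?thesis using valid_basic(6)[OF assms(1)] by simp
  next
    case False
    have "set_pmf (roll E Ms \<pi> (Suc h)) = (\<Union>x\<in>set_pmf (roll E Ms \<pi> h). set_pmf (trans E Ms h x (\<pi> h x)))"
      using False by simp
    also have "\<dots> \<subseteq> states E" using trans_support[OF assms(2)] by blast
    finally show ?thesis .
  qed
qed

lemma Er_bounds:
  assumes "valid_setting E"
  shows "0 \<le> Er E h x a" "Er E h x a \<le> 1"
proof -
  have b: "\<And>r. r \<in> set_pmf (Rew E h x a) \<Longrightarrow> 0 \<le> r \<and> r \<le> 1"
    using valid_basic(7)[OF assms, of h x a] by auto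
  have int: "integrable (measure_pmf (Rew E h x a)) (\<lambda>r. r)"
    by (rule pmf_int_bound[where B=1]) (use b in auto)
  show "Er E h x a \<le> 1" unfolding Er_def by (rule pmf_le_bound) (use b int in auto)
  show "0 \<le> Er E h x a" unfolding Er_def by (rule integral_nonneg_AE) (use b in \<open>auto simp: AE_measure_pmf_iff\<close>)
qed

lemma Vn_nonneg:
  assumes "valid_setting E"
  shows "0 \<le> Vn E M n x"
proof (induction n arbitrary: x)
  case 0
  then show ?case by simp
next
  case (Suc n)
  obtain a where a: "a \<in> Act E" using valid_basic(4)[OF assms] by blast
  have "0 \<le> Er E (Hor E - n) x a + measure_pmf.expectation (trans E M (Hor E - n) x a) (Vn E M n)"
    using Er_bounds(1)[OF assms] Suc.IH by (intro add_nonneg_nonneg integral_nonneg_AE) auto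
  also have "\<dots> \<le> Vn E M (Suc n) x"
    unfolding Vn.simps(2) by (rule Max_ge) (use a valid_basic(3)[OF assms] in auto)
  finally show ?case .
qed

definition valid_prefix :: "fsetting \<Rightarrow> nat \<Rightarrow> (nat \<Rightarrow> state) \<Rightarrow> (nat \<Rightarrow> nat) \<Rightarrow> (nat \<Rightarrow> real) \<Rightarrow> bool" where
  "valid_prefix E t xs as rs \<longleftrightarrow> (\<forall>s\<in>{1..t}. xs s \<in> states E \<and> as s \<in> Act E \<and>
                    rs s \<in> set_pmf (Rew E s (xs s) (as s)))"

lemma Vn_upper:
  assumes "valid_setting E" "M \<in> models E"
  shows "n \<le> Hor E \<Longrightarrow> x \<in> states E \<Longrightarrow> valid_prefix E (Hor E - n) xs as rs \<Longrightarrow>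
         (\<Sum>s=1..Hor E - n. rs s) + Vn E M n x \<le> 1"
proof (induction n arbitrary: x xs as rs)
  case 0
  then show ?case using assms(1) unfolding valid_setting_def valid_prefix_def by auto
next
  case (Suc n)
  define t where "t = Hor E - n"
  have t1: "t \<ge> 1" "Hor E - Suc n = t - 1" using Suc.prems(1) by (auto simp: t_def)
  define S where "S = (\<Sum>s=1..t-1. rs s)"
  have each: "Er E t x a + measure_pmf.expectation (trans E M t x a) (Vn E M n) \<le> 1 - S"
    if a: "a \<in> Act E" for a
  proof -
    have rb: "\<And>r. r \<in> set_pmf (Rew E t x a) \<Longrightarrow> 0 \<le> r \<and> r \<le> 1"
      using valid_basic(7)[OF assms(1), of t x a] by auto
    have intr: "integrable (measure_pmf (Rew E t x a)) (\<lambda>r. r)"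
      by (rule pmf_int_bound[where B=1]) (use rb in auto)
    have intV: "integrable (measure_pmf (trans E M t x a)) (Vn E M n)"
      by (rule integrable_measure_pmf_finite[OF trans_finite[OF assms]])
    have pt: "r + measure_pmf.expectation (trans E M t x a) (Vn E M n) \<le> 1 - S"
      if r: "r \<in> set_pmf (Rew E t x a)" for r
    proof -
      have "measure_pmf.expectation (trans E M t x a) (Vn E M n) \<le> 1 - S - r"
      proof (rule pmf_le_bound[OF _ intV])
        fix x' assume x': "x' \<in> set_pmf (trans E M t x a)"
        have vp: "valid_prefix E (Hor E - n) (xs(t:=x)) (as(t:=a)) (rs(t:=r))"
          using Suc.prems(2,3) t1 a r unfolding valid_prefix_def t_def[symmetric]
          by (auto simp: le_Suc_eq)
        have "(\<Sum>s=1..Hor E - n. (rs(t:=r)) s) + Vn E M n x' \<le> 1"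
          using Suc.IH[OF _ _ vp] Suc.prems(1) trans_support[OF assms(2)] x' by (meson Suc_leD subsetD)
        moreover have "(\<Sum>s=1..Hor E - n. (rs(t:=r)) s) = S + r"
        proof -
          have "{1..t} = insert t {1..t-1}" using t1 by auto
          then have "(\<Sum>s=1..t. (rs(t:=r)) s) = (\<Sum>s\<in>insert t {1..t-1}. (rs(t:=r)) s)" by simp
          also have "\<dots> = r + (\<Sum>s=1..t-1. (rs(t:=r)) s)" by (subst sum.insert) (use t1 in auto)
          also have "(\<Sum>s=1..t-1. (rs(t:=r)) s) = S" unfolding S_def using t1 by (intro sum.cong) auto
          finally show ?thesis by (simp add: t_def)
        qed
        ultimately show "Vn E M n x' \<le> 1 - S - r" by simp
      qed
      then show ?thesis by simp
    qed
    have "Er E t x a + measure_pmf.expectation (trans E M t x a) (Vn E M n) =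
          measure_pmf.expectation (Rew E t x a) (\<lambda>r. r + measure_pmf.expectation (trans E M t x a) (Vn E M n))"
      unfolding Er_def
      by (subst Bochner_Integration.integral_add) (auto simp: intr)
    also have "\<dots> \<le> 1 - S"
    proof (rule pmf_le_bound)
      show "integrable (measure_pmf (Rew E t x a)) (\<lambda>r. r + measure_pmf.expectation (trans E M t x a) (Vn E M n))"
        by (intro Bochner_Integration.integrable_add intr) simp
    qed (use pt in auto)
    finally show ?thesis .
  qed
  have "Vn E M (Suc n) x \<le> 1 - S"
    unfolding Vn.simps(2) t_def[symmetric]
    using each valid_basic(3,4)[OF assms(1)] by (subst Max_le_iff) auto
  then show ?case using t1 S_def by simp
qed

lemma V_bound:
  assumes "valid_setting E" "M \<in> models E" "h \<in> {1..Hor E}" "x \<in> states E"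
  shows "\<bar>V E M (h+1) x\<bar> \<le> 1"
proof -
  obtain x0 where x0: "x0 \<in> states E" using states_ne[OF assms(1)] by blast
  obtain a0 where a0: "a0 \<in> Act E" using valid_basic(4)[OF assms(1)] by blast
  define rs where "rs s = (SOME r. r \<in> set_pmf (Rew E s x0 a0))" for s
  have rs: "rs s \<in> set_pmf (Rew E s x0 a0)" for s
    unfolding rs_def using set_pmf_not_empty by (metis ex_in_conv someI_ex)
  have vp: "valid_prefix E (Hor E - (Hor E - h)) (\<lambda>_. x0) (\<lambda>_. a0) rs"
    unfolding valid_prefix_def using x0 a0 rs by auto
  have "(\<Sum>s=1..Hor E - (Hor E - h). rs s) + Vn E M (Hor E - h) x \<le> 1"
    by (rule Vn_upper[OF assms(1,2) _ assms(4) vp]) simp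
  moreover have "0 \<le> (\<Sum>s=1..Hor E - (Hor E - h). rs s)"
    using rs valid_basic(7)[OF assms(1)] by (intro sum_nonneg) (meson atLeastAtMost_iff subsetD)
  moreover have "V E M (h+1) x = Vn E M (Hor E - h) x" unfolding V_def by simp
  ultimately show ?thesis using Vn_nonneg[OF assms(1)] by (simp add: abs_le_iff)
qed

lemma pol_in:
  assumes "valid_setting E"
  shows "pol E M h x \<in> Act E"
proof -
  let ?Q = "\<lambda>a. Q E M h x a"
  have fin: "finite (Act E)" "Act E \<noteq> {}" using valid_basic(3,4)[OF assms] by auto
  have "Max (?Q ` Act E) \<in> ?Q ` Act E" by (rule Max_in) (use fin in auto)
  then obtain a0 where a0: "a0 \<in> Act E" "?Q a0 = Max (?Q ` Act E)" by auto
  have "a0 \<in> Act E \<and> (\<forall>b\<in>Act E. ?Q b \<le> ?Q a0)" using a0 fin by auto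
  then show ?thesis unfolding pol_def by (rule LeastI2_ex[OF exI]) auto
qed

definition Dm :: "fsetting \<Rightarrow> model \<Rightarrow> model \<Rightarrow> nat \<Rightarrow> nat \<Rightarrow> state \<Rightarrow> nat \<Rightarrow> real" where
  "Dm E Ms M' h i z a = (\<Sum>y\<in>Obs E. \<bar>pmf (M' h i z a) y - pmf (Ms h i z a) y\<bar>)"

definition Jset :: "fsetting \<Rightarrow> (nat \<times> state \<times> nat) set" where
  "Jset E = (SIGMA i:{..<nfeat E}. PiE (pa E i) (\<lambda>_. Obs E) \<times> Act E)"

definition wt :: "fsetting \<Rightarrow> model \<Rightarrow> model \<Rightarrow> nat \<Rightarrow> nat \<times> state \<times> nat \<Rightarrow> real" where
  "wt E Ms M h j = (case j of (i,z,a) \<Rightarrow>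
     (\<Sum>x\<in>{x\<in>states E. restrict x (pa E i) = z}. pmf (roll E Ms (pol E M) h) x) / real (card (Act E)))"

definition Dj :: "fsetting \<Rightarrow> model \<Rightarrow> nat \<Rightarrow> model \<Rightarrow> nat \<times> state \<times> nat \<Rightarrow> real" where
  "Dj E Ms h M' j = (case j of (i,z,a) \<Rightarrow> Dm E Ms M' h i z a)"

definition Amat :: "fsetting \<Rightarrow> model \<Rightarrow> nat \<Rightarrow> model \<Rightarrow> model \<Rightarrow> real" where
  "Amat E Ms h M M' = (\<Sum>j\<in>Jset E. wt E Ms M h j * Dj E Ms h M' j)"

lemma restrict_in:
  assumes "valid_setting E" "i < nfeat E" "x \<in> states E"
  shows "restrict x (pa E i) \<in> PiE (pa E i) (\<lambda>_. Obs E)"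
  using assms valid_basic(5)[OF assms(1,2)] unfolding states_def by (auto simp: PiE_def Pi_def)

lemma pa_finite: "valid_setting E \<Longrightarrow> i < nfeat E \<Longrightarrow> finite (pa E i)"
  using valid_basic(5) finite_subset by blast

lemma Amat_eq:
  assumes "valid_setting E" "Ms \<in> models E"
  shows "Amat E Ms h M M' = measure_pmf.expectation (roll E Ms (pol E M) h)
     (\<lambda>x. (\<Sum>a\<in>Act E. \<Sum>i<nfeat E. Dm E Ms M' h i (restrict x (pa E i)) a) / real (card (Act E)))"
proof -
  let ?p = "roll E Ms (pol E M) h"
  let ?S = "states E"
  let ?K = "real (card (Act E))"
  let ?P = "\<lambda>i. PiE (pa E i) (\<lambda>_. Obs E)"
  have finS: "finite ?S" by (rule states_finite[OF assms(1)])
  have finA: "finite (Act E)" using valid_basic(3)[OF assms(1)] .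
  have finP: "finite (?P i)" if "i < nfeat E" for i
    using pa_finite[OF assms(1) that] valid_basic(1)[OF assms(1)] by (intro finite_PiE) auto
  have "Amat E Ms h M M' = (\<Sum>i<nfeat E. \<Sum>(z,a)\<in>?P i \<times> Act E. wt E Ms M h (i,z,a) * Dj E Ms h M' (i,z,a))"
  proof -
    have "(\<Sum>i<nfeat E. \<Sum>j'\<in>?P i \<times> Act E. wt E Ms M h (i,j') * Dj E Ms h M' (i,j')) =
          (\<Sum>(i,j')\<in>Jset E. wt E Ms M h (i,j') * Dj E Ms h M' (i,j'))"
      unfolding Jset_def by (rule sum.Sigma) (auto simp: finP finA)
    then show ?thesis unfolding Amat_def by (simp add: case_prod_beta')
  qed
  also have "\<dots> = (\<Sum>i<nfeat E. \<Sum>a\<in>Act E. \<Sum>z\<in>?P i.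
       (\<Sum>x\<in>{x\<in>?S. restrict x (pa E i) = z}. pmf ?p x) * (Dm E Ms M' h i z a / ?K))"
  proof (intro sum.cong refl)
    fix i assume i: "i \<in> {..<nfeat E}"
    have "(\<Sum>(z,a)\<in>?P i \<times> Act E. wt E Ms M h (i,z,a) * Dj E Ms h M' (i,z,a))
        = (\<Sum>z\<in>?P i. \<Sum>a\<in>Act E. wt E Ms M h (i,z,a) * Dj E Ms h M' (i,z,a))"
      by (rule sum.cartesian_product[symmetric])
    also have "\<dots> = (\<Sum>a\<in>Act E. \<Sum>z\<in>?P i. wt E Ms M h (i,z,a) * Dj E Ms h M' (i,z,a))"
      by (rule sum.swap)
    finally show "(\<Sum>(z,a)\<in>?P i \<times> Act E. wt E Ms M h (i,z,a) * Dj E Ms h M' (i,z,a)) = (\<Sum>a\<in>Act E. \<Sum>z\<in>?P i.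
       (\<Sum>x\<in>{x\<in>?S. restrict x (pa E i) = z}. pmf ?p x) * (Dm E Ms M' h i z a / ?K))"
      by (simp add: wt_def Dj_def)
  qed
  also have "\<dots> = (\<Sum>i<nfeat E. \<Sum>a\<in>Act E. \<Sum>x\<in>?S. pmf ?p x * (Dm E Ms M' h i (restrict x (pa E i)) a / ?K))"
  proof (rule sum.cong[OF refl], rule sum.cong[OF refl])
    fix i a assume i: "i \<in> {..<nfeat E}" and "a \<in> Act E"
    show "(\<Sum>z\<in>?P i. (\<Sum>x\<in>{x\<in>?S. restrict x (pa E i) = z}. pmf ?p x) * (Dm E Ms M' h i z a / ?K)) =
          (\<Sum>x\<in>?S. pmf ?p x * (Dm E Ms M' h i (restrict x (pa E i)) a / ?K))"
    proof -
      have i': "i < nfeat E" using i by simp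
      have sub: "(\<lambda>x. restrict x (pa E i)) ` ?S \<subseteq> ?P i"
      proof (rule image_subsetI)
        fix x assume "x \<in> ?S"
        then show "restrict x (pa E i) \<in> ?P i" using restrict_in[OF assms(1)] i' by blast
      qed
      show ?thesis by (rule group_lemma[OF finS finP[OF i'] sub])
    qed
  qed
  also have "\<dots> = (\<Sum>x\<in>?S. (\<Sum>a\<in>Act E. \<Sum>i<nfeat E. Dm E Ms M' h i (restrict x (pa E i)) a) / ?K * pmf ?p x)"
  proof -
    let ?G = "\<lambda>i a x. pmf ?p x * (Dm E Ms M' h i (restrict x (pa E i)) a / ?K)"
    have "(\<Sum>i<nfeat E. \<Sum>a\<in>Act E. \<Sum>x\<in>?S. ?G i a x) = (\<Sum>a\<in>Act E. \<Sum>i<nfeat E. \<Sum>x\<in>?S. ?G i a x)"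
      by (rule sum.swap)
    also have "\<dots> = (\<Sum>a\<in>Act E. \<Sum>x\<in>?S. \<Sum>i<nfeat E. ?G i a x)"
      by (rule sum.cong[OF refl], rule sum.swap)
    also have "\<dots> = (\<Sum>x\<in>?S. \<Sum>a\<in>Act E. \<Sum>i<nfeat E. ?G i a x)"
      by (rule sum.swap)
    also have "\<dots> = (\<Sum>x\<in>?S. (\<Sum>a\<in>Act E. \<Sum>i<nfeat E. Dm E Ms M' h i (restrict x (pa E i)) a) / ?K * pmf ?p x)"
      by (simp add: sum_divide_distrib sum_distrib_right sum_distrib_left mult_ac)
    finally show ?thesis .
  qed
  also have "\<dots> = measure_pmf.expectation ?p
     (\<lambda>x. (\<Sum>a\<in>Act E. \<Sum>i<nfeat E. Dm E Ms M' h i (restrict x (pa E i)) a) / ?K)"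
    by (rule integral_measure_pmf_real[symmetric]) (use finS roll_support[OF assms] in auto)
  finally show ?thesis .
qed

lemma Estep_g:
  assumes "valid_setting E" "M \<in> models E"
  shows "Estep E M h x a (\<lambda>h x a r x'. r + W h x') =
         Er E h x a + measure_pmf.expectation (trans E M h x a) (W h)"
proof -
  have rb: "\<And>r. r \<in> set_pmf (Rew E h x a) \<Longrightarrow> 0 \<le> r \<and> r \<le> 1"
    using valid_basic(7)[OF assms(1), of h x a] by auto
  have intr: "integrable (measure_pmf (Rew E h x a)) (\<lambda>r. r)"
    by (rule pmf_int_bound[where B=1]) (use rb in auto)
  have intW: "integrable (measure_pmf (trans E M h x a)) (W h)"
    by (rule integrable_measure_pmf_finite[OF trans_finite[OF assms]])
  have "Estep E M h x a (\<lambda>h x a r x'. r + W h x') =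
        measure_pmf.expectation (Rew E h x a) (\<lambda>r. r + measure_pmf.expectation (trans E M h x a) (W h))"
    unfolding Estep_def by (subst Bochner_Integration.integral_add) (auto simp: intW)
  also have "\<dots> = Er E h x a + measure_pmf.expectation (trans E M h x a) (W h)"
    unfolding Er_def by (subst Bochner_Integration.integral_add) (auto simp: intr)
  finally show ?thesis .
qed

lemma bellman_pt:
  assumes "valid_setting E" "Ms \<in> models E" "M' \<in> models E" "h \<in> {1..Hor E}"
  shows "(let g = (\<lambda>h x a r x'. r + V E M' (h + 1) x')
          in Estep E M' h x a g - Estep E Ms h x a g)
         \<le> (\<Sum>i<nfeat E. Dm E Ms M' h i (restrict x (pa E i)) a)"
proof -
  have "(let g = (\<lambda>h x a r x'. r + V E M' (h + 1) x')
          in Estep E M' h x a g - Estep E Ms h x a g) =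
        measure_pmf.expectation (trans E M' h x a) (V E M' (h+1)) -
        measure_pmf.expectation (trans E Ms h x a) (V E M' (h+1))"
    using Estep_g[OF assms(1,3), of h x a "\<lambda>h. V E M' (h+1)"] Estep_g[OF assms(1,2), of h x a "\<lambda>h. V E M' (h+1)"]
    by (simp add: Let_def)
  also have "\<dots> \<le> (\<Sum>i<nfeat E. \<Sum>y\<in>Obs E. \<bar>pmf (M' h i (restrict x (pa E i)) a) y - pmf (Ms h i (restrict x (pa E i)) a) y\<bar>)"
    unfolding trans_def
  proof (rule hybrid)
    show "finite {..<nfeat E}" by simp
    show "finite (Obs E)" using valid_basic(1)[OF assms(1)] .
    show "\<forall>i\<in>{..<nfeat E}. set_pmf (M' h i (restrict x (pa E i)) a) \<subseteq> Obs E \<and> set_pmf (Ms h i (restrict x (pa E i)) a) \<subseteq> Obs E"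
      using assms(2,3) by (auto simp: models_def)
    show "\<forall>f\<in>PiE_dflt {..<nfeat E} undefined (\<lambda>_. Obs E). \<bar>V E M' (h + 1) f\<bar> \<le> 1"
      using V_bound[OF assms(1,3,4)] by (simp add: PiE_dflt_undef states_def)
  qed
  finally show ?thesis unfolding Dm_def .
qed

definition phi :: "model \<Rightarrow> model \<Rightarrow> nat \<Rightarrow> state \<Rightarrow> nat \<Rightarrow> nat \<Rightarrow> nat \<Rightarrow> real" where
  "phi Ms M' i z a h y = (if pmf (Ms h i z a) y \<le> pmf (M' h i z a) y then 1 else -1)"

definition fstar :: "fsetting \<Rightarrow> model \<Rightarrow> model \<Rightarrow> nat \<Rightarrow> state \<Rightarrow> nat \<Rightarrow> real \<Rightarrow> state \<Rightarrow> real" where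
  "fstar E Ms M' = (\<lambda>h x a r x'. \<Sum>i<nfeat E. phi Ms M' i (restrict x (pa E i)) a h (x' i))"

lemma fstar_in: "fstar E Ms M' \<in> Fcls E"
proof -
  define g where "g i = (\<lambda>h x a (r::real) (x'::state). phi Ms M' i (restrict x (pa E i)) a h (x' i))" for i
  have "g i \<in> Gcls E i" for i
    unfolding Gcls_def g_def
  proof (intro CollectI conjI allI)
    show "\<And>h x a r x'. phi Ms M' i (restrict x (pa E i)) a h (x' i) \<in> {- 1, 1}" by (simp add: phi_def)
    show "\<exists>\<phi>. \<forall>h x a r x'. phi Ms M' i (restrict x (pa E i)) a h (x' i) = \<phi> (restrict x (pa E i)) a h (x' i)"
      by (rule exI[of _ "\<lambda>z a h y. phi Ms M' i z a h y"]) simp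
  qed
  then show ?thesis unfolding Fcls_def fstar_def
  proof (intro CollectI exI conjI)
    show "\<forall>i<nfeat E. g i \<in> Gcls E i" using \<open>\<And>i. g i \<in> Gcls E i\<close> by blast
    show "(\<lambda>h x a r x'. \<Sum>i<nfeat E. phi Ms M' i (restrict x (pa E i)) a h (x' i)) = (\<lambda>h x a r x'. \<Sum>i<nfeat E. g i h x a r x')"
      unfolding g_def by simp
  qed
qed

lemma sgn_mult: "(if (p::real) \<le> q then 1 else -1) * (q - p) = \<bar>q - p\<bar>"
  by auto

lemma Estep_fstar:
  assumes "valid_setting E" "M \<in> models E"
  shows "Estep E M h x a (fstar E Ms M') =
    (\<Sum>i<nfeat E. \<Sum>y\<in>Obs E. phi Ms M' i (restrict x (pa E i)) a h y * pmf (M h i (restrict x (pa E i)) a) y)"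
proof -
  have "measure_pmf.expectation (trans E M h x a) (\<lambda>x'. \<Sum>i<nfeat E. phi Ms M' i (restrict x (pa E i)) a h (x' i))
     = (\<Sum>i<nfeat E. measure_pmf.expectation (trans E M h x a) (\<lambda>x'. phi Ms M' i (restrict x (pa E i)) a h (x' i)))"
    by (rule Bochner_Integration.integral_sum) (rule integrable_measure_pmf_finite[OF trans_finite[OF assms]])
  also have "\<dots> = (\<Sum>i<nfeat E. \<Sum>y\<in>Obs E. phi Ms M' i (restrict x (pa E i)) a h y * pmf (M h i (restrict x (pa E i)) a) y)"
  proof (rule sum.cong[OF refl])
    fix i assume i: "i \<in> {..<nfeat E}"
    have "measure_pmf.expectation (trans E M h x a) (\<lambda>x'. phi Ms M' i (restrict x (pa E i)) a h (x' i))
        = measure_pmf.expectation (M h i (restrict x (pa E i)) a) (phi Ms M' i (restrict x (pa E i)) a h)"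
      unfolding trans_def by (rule pi_marginal) (use i in auto)
    also have "\<dots> = (\<Sum>y\<in>Obs E. phi Ms M' i (restrict x (pa E i)) a h y * pmf (M h i (restrict x (pa E i)) a) y)"
    proof (rule integral_measure_pmf_real)
      have sub: "set_pmf (M h i (restrict x (pa E i)) a) \<subseteq> Obs E" using assms(2) by (simp add: models_def)
      show "finite (Obs E)" using valid_basic(1)[OF assms(1)] .
      show "\<And>y. y \<in> set_pmf (M h i (restrict x (pa E i)) a) \<Longrightarrow> phi Ms M' i (restrict x (pa E i)) a h y \<noteq> 0 \<Longrightarrow> y \<in> Obs E"
        using sub by blast
    qed
    finally show "measure_pmf.expectation (trans E M h x a) (\<lambda>x'. phi Ms M' i (restrict x (pa E i)) a h (x' i)) = \<dots>" .
  qed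
  finally show ?thesis unfolding Estep_def fstar_def by simp
qed

lemma fstar_diff:
  assumes "valid_setting E" "Ms \<in> models E" "M' \<in> models E"
  shows "Estep E M' h x a (fstar E Ms M') - Estep E Ms h x a (fstar E Ms M') =
         (\<Sum>i<nfeat E. Dm E Ms M' h i (restrict x (pa E i)) a)"
  unfolding Estep_fstar[OF assms(1,3)] Estep_fstar[OF assms(1,2)] Dm_def
  by (simp add: sum_subtractf[symmetric] right_diff_distrib[symmetric] phi_def sgn_mult)

lemma Fcls_bound:
  assumes "f \<in> Fcls E"
  shows "\<bar>f h x a r x'\<bar> \<le> real (nfeat E)"
proof -
  obtain g where g: "\<forall>i<nfeat E. g i \<in> Gcls E i" "f = (\<lambda>h x a r x'. \<Sum>i<nfeat E. g i h x a r x')"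
    using assms unfolding Fcls_def by blast
  have gb: "\<bar>g i h x a r x'\<bar> \<le> 1" if "i < nfeat E" for i
  proof -
    have "g i \<in> Gcls E i" using g(1) that by blast
    then have "g i h x a r x' \<in> {-1, 1}" unfolding Gcls_def by blast
    then show ?thesis by auto
  qed
  have "\<bar>f h x a r x'\<bar> \<le> (\<Sum>i<nfeat E. \<bar>g i h x a r x'\<bar>)" unfolding g(2) by (rule sum_abs)
  also have "\<dots> \<le> (\<Sum>i<nfeat E. 1)" by (rule sum_mono) (use gb in auto)
  finally show ?thesis by simp
qed

lemma Estep_bound:
  assumes "\<And>h x a r x'. \<bar>f h x a r x'\<bar> \<le> B"
  shows "\<bar>Estep E M h x a f\<bar> \<le> B"
  unfolding Estep_def by (intro pmf_abs_bound) (use assms in auto)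

lemma val_bound:
  assumes "f \<in> Fcls E"
  shows "measure_pmf.expectation (roll E Ms (pol E M) h)
     (\<lambda>x. measure_pmf.expectation (pmf_of_set (Act E))
        (\<lambda>a. Estep E M' h x a f - Estep E Ms h x a f)) \<le> 2 * real (nfeat E)"
proof -
  have "\<bar>Estep E M' h x a f - Estep E Ms h x a f\<bar> \<le> 2 * real (nfeat E)" for x a
  proof -
    have "\<bar>Estep E M' h x a f\<bar> \<le> real (nfeat E)" "\<bar>Estep E Ms h x a f\<bar> \<le> real (nfeat E)"
      by (intro Estep_bound Fcls_bound[OF assms])+
    then show ?thesis by linarith
  qed
  then have "\<bar>measure_pmf.expectation (roll E Ms (pol E M) h)
     (\<lambda>x. measure_pmf.expectation (pmf_of_set (Act E))
        (\<lambda>a. Estep E M' h x a f - Estep E Ms h x a f))\<bar> \<le> 2 * real (nfeat E)"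
    by (intro pmf_abs_bound) auto
  then show ?thesis by linarith
qed

lemma A_le_W:
  assumes "valid_setting E" "Ms \<in> models E" "M' \<in> models E"
  shows "Amat E Ms h M M' \<le> witness_misfit E Ms M M' h"
proof -
  let ?val = "\<lambda>f. measure_pmf.expectation (roll E Ms (pol E M) h)
     (\<lambda>x. measure_pmf.expectation (pmf_of_set (Act E))
        (\<lambda>a. Estep E M' h x a f - Estep E Ms h x a f))"
  have ne: "Act E \<noteq> {}" and fin: "finite (Act E)" using valid_basic(3,4)[OF assms(1)] by auto
  have "?val (fstar E Ms M') = measure_pmf.expectation (roll E Ms (pol E M) h)
     (\<lambda>x. (\<Sum>a\<in>Act E. \<Sum>i<nfeat E. Dm E Ms M' h i (restrict x (pa E i)) a) / real (card (Act E)))"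
    by (simp add: integral_pmf_of_set[OF ne fin] fstar_diff[OF assms])
  also have "\<dots> = Amat E Ms h M M'" by (rule Amat_eq[OF assms(1,2), symmetric])
  finally have eq: "?val (fstar E Ms M') = Amat E Ms h M M'" .
  have "?val (fstar E Ms M') \<le> (SUP f\<in>Fcls E. ?val f)"
    by (rule cSUP_upper[OF fstar_in]) (auto intro!: bdd_aboveI2 val_bound)
  then show ?thesis unfolding witness_misfit_def eq .
qed

lemma bellman_le_A:
  assumes "valid_setting E" "Ms \<in> models E" "M' \<in> models E" "h \<in> {1..Hor E}"
  shows "1 / real (card (Act E)) * bellman_err E Ms M M' h \<le> Amat E Ms h M M'"
proof -
  let ?p = "roll E Ms (pol E M) h"
  let ?F = "\<lambda>x. let a = pol E M' h x; g = (\<lambda>h x a r x'. r + V E M' (h + 1) x')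
          in Estep E M' h x a g - Estep E Ms h x a g"
  let ?G = "\<lambda>x. (\<Sum>a\<in>Act E. \<Sum>i<nfeat E. Dm E Ms M' h i (restrict x (pa E i)) a) / real (card (Act E))"
  have ne: "Act E \<noteq> {}" and fin: "finite (Act E)" using valid_basic(3,4)[OF assms(1)] by auto
  have finp: "finite (set_pmf ?p)"
    by (rule finite_subset[OF roll_support[OF assms(1,2)] states_finite[OF assms(1)]])
  have Dnn: "0 \<le> Dm E Ms M' h i z a" for i z a unfolding Dm_def by (intro sum_nonneg) auto
  have pt: "1 / real (card (Act E)) * ?F x \<le> ?G x" for x
  proof -
    let ?a = "pol E M' h x"
    have a: "?a \<in> Act E" by (rule pol_in[OF assms(1)])
    have "?F x \<le> (\<Sum>i<nfeat E. Dm E Ms M' h i (restrict x (pa E i)) ?a)"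
      using bellman_pt[OF assms, of x ?a] by (simp add: Let_def)
    also have "\<dots> \<le> (\<Sum>a\<in>Act E. \<Sum>i<nfeat E. Dm E Ms M' h i (restrict x (pa E i)) a)"
      by (rule member_le_sum[OF a _ fin, of "\<lambda>a. \<Sum>i<nfeat E. Dm E Ms M' h i (restrict x (pa E i)) a"])
         (intro sum_nonneg Dnn)
    finally show ?thesis using ne fin by (simp add: divide_right_mono card_gt_0_iff)
  qed
  have "1 / real (card (Act E)) * bellman_err E Ms M M' h = measure_pmf.expectation ?p (\<lambda>x. 1 / real (card (Act E)) * ?F x)"
    unfolding bellman_err_def by simp
  also have "\<dots> \<le> measure_pmf.expectation ?p ?G"
    by (rule integral_mono[OF _ _ pt]) (simp_all only: integrable_measure_pmf_finite[OF finp])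
  also have "\<dots> = Amat E Ms h M M'" by (rule Amat_eq[OF assms(1,2), symmetric])
  finally show ?thesis .
qed

lemma card_Jset:
  assumes "valid_setting E"
  shows "card (Jset E) * card (Obs E) = Lh E" "finite (Jset E)"
proof -
  have finA: "finite (Act E)" "finite (Obs E)" using valid_basic(1,3)[OF assms] by auto
  have finP: "finite (PiE (pa E i) (\<lambda>_. Obs E))" if "i < nfeat E" for i
    using pa_finite[OF assms that] finA by (intro finite_PiE) auto
  have cP: "card (PiE (pa E i) (\<lambda>_. Obs E)) = card (Obs E) ^ card (pa E i)" if "i < nfeat E" for i
    using pa_finite[OF assms that] by (simp add: card_PiE)
  have "card (Jset E) = (\<Sum>i<nfeat E. card (PiE (pa E i) (\<lambda>_. Obs E) \<times> Act E))"
    unfolding Jset_def by (rule card_SigmaI) (auto simp: finP finA)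
  also have "\<dots> = (\<Sum>i<nfeat E. card (Obs E) ^ card (pa E i) * card (Act E))"
    by (intro sum.cong refl) (simp add: card_cartesian_product cP)
  finally have "card (Jset E) * card (Obs E) = (\<Sum>i<nfeat E. card (Obs E) ^ card (pa E i) * card (Act E)) * card (Obs E)"
    by simp
  also have "\<dots> = (\<Sum>i<nfeat E. card (Obs E) ^ card (pa E i) * card (Act E) * card (Obs E))"
    by (rule sum_distrib_right)
  also have "\<dots> = Lh E" unfolding Lh_def
    by (intro sum.cong refl) (simp only: power_Suc plus_1_eq_Suc mult.commute mult.left_commute)
  finally show "card (Jset E) * card (Obs E) = Lh E" .
  show "finite (Jset E)" unfolding Jset_def by (intro finite_SigmaI finite_cartesian_product) (auto simp: finP finA)
qed

lemma wt_bounds: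
  assumes "valid_setting E"
  shows "0 \<le> wt E Ms M h j" "wt E Ms M h j \<le> 1 / real (card (Act E))"
proof -
  obtain i z a where j: "j = (i,z,a)" by (cases j) auto
  let ?T = "{x\<in>states E. restrict x (pa E i) = z}"
  have fin: "finite ?T" using states_finite[OF assms] by simp
  have "(\<Sum>x\<in>?T. pmf (roll E Ms (pol E M) h) x) = measure (measure_pmf (roll E Ms (pol E M) h)) ?T"
    by (rule measure_measure_pmf_finite[OF fin, symmetric])
  also have "\<dots> \<le> 1" by (rule measure_pmf.prob_le_1)
  finally have s: "(\<Sum>x\<in>?T. pmf (roll E Ms (pol E M) h) x) \<le> 1" .
  have s0: "0 \<le> (\<Sum>x\<in>?T. pmf (roll E Ms (pol E M) h) x)" by (intro sum_nonneg) auto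
  show "0 \<le> wt E Ms M h j" unfolding wt_def j using s0 by simp
  show "wt E Ms M h j \<le> 1 / real (card (Act E))" unfolding wt_def j using s by (simp add: divide_right_mono)
qed

lemma Dj_bounds:
  shows "0 \<le> Dj E Ms h M' j" "Dj E Ms h M' j \<le> real (card (Obs E))"
proof -
  obtain i z a where j: "j = (i,z,a)" by (cases j) auto
  have b: "\<bar>pmf (M' h i z a) y - pmf (Ms h i z a) y\<bar> \<le> 1" for y
    using pmf_le_1[of "M' h i z a" y] pmf_le_1[of "Ms h i z a" y] pmf_nonneg[of "M' h i z a" y] pmf_nonneg[of "Ms h i z a" y]
    by linarith
  show "0 \<le> Dj E Ms h M' j" unfolding Dj_def j Dm_def by (simp add: sum_nonneg)
  have "(\<Sum>y\<in>Obs E. \<bar>pmf (M' h i z a) y - pmf (Ms h i z a) y\<bar>) \<le> (\<Sum>y\<in>Obs E. 1)"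
    by (rule sum_mono) (rule b)
  then show "Dj E Ms h M' j \<le> real (card (Obs E))" unfolding Dj_def j Dm_def by simp
qed

lemma sqrt_sum_bound:
  fixes f :: "nat \<Rightarrow> real"
  assumes "\<And>n. n < k \<Longrightarrow> 0 \<le> f n \<and> f n \<le> B"
  shows "sqrt (\<Sum>n<k. (f n)\<^sup>2) \<le> sqrt (real k) * B"
proof -
  have B0: "0 \<le> B" if "k > 0" using assms[of 0] that by auto
  have "(\<Sum>n<k. (f n)\<^sup>2) \<le> (\<Sum>n<k. B\<^sup>2)"
  proof (rule sum_mono)
    fix n assume "n \<in> {..<k}"
    then have "0 \<le> f n" "f n \<le> B" using assms by auto
    then show "(f n)\<^sup>2 \<le> B\<^sup>2" by (rule power_mono[rotated])
  qed
  then have "sqrt (\<Sum>n<k. (f n)\<^sup>2) \<le> sqrt (real k * B\<^sup>2)" by simp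
  also have "\<dots> = sqrt (real k) * B"
    using B0 by (cases "k = 0") (auto simp: real_sqrt_mult)
  finally show ?thesis .
qed

theorem mainTheorem12:
  shows "\<exists>c::real. \<forall>E Ms h. valid_setting E \<and> Ms \<in> models E \<and> h \<in> {1..Hor E} \<longrightarrow>
     (\<exists>\<beta>. \<beta> \<le> c * real (Ltot E) / real (card (Act E)) \<and>
        witness_rank_le E Ms (1 / real (card (Act E))) \<beta> h
          (real (Lh E) / real (card (Obs E))))"
proof (rule exI[of _ 1], intro allI impI)
  fix E Ms h assume as: "valid_setting E \<and> Ms \<in> models E \<and> h \<in> {1..Hor E}"
  then have v: "valid_setting E" and ms: "Ms \<in> models E" and hh: "h \<in> {1..Hor E}" by auto
  let ?K = "real (card (Act E))"
  let ?O = "real (card (Obs E))"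
  define k where "k = card (Jset E)"
  have Kpos: "?K > 0" and Opos: "?O > 0"
    using valid_basic(1-4)[OF v] by (auto simp: card_gt_0_iff)
  have kO: "real k * ?O = real (Lh E)" using card_Jset(1)[OF v] unfolding k_def
    by (metis of_nat_mult)
  obtain enum where enum: "bij_betw enum {0..<k} (Jset E)"
    using ex_bij_betw_nat_finite[OF card_Jset(2)[OF v]] unfolding k_def by blast
  have enum_in: "enum n \<in> Jset E" if "n < k" for n
    using enum that by (auto simp: bij_betw_def)
  define \<beta> where "\<beta> = real k * ?O / ?K"
  have LL: "Lh E \<le> Ltot E"
  proof -
    have "Ltot E = Hor E * Lh E" unfolding Ltot_def Lh_def by (simp add: sum_distrib_left mult_ac)
    then show ?thesis using hh by simp
  qed
  have "\<beta> \<le> 1 * real (Ltot E) / ?K"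
    unfolding \<beta>_def kO using LL Kpos by (simp add: divide_right_mono)
  moreover have "witness_rank_le E Ms (1 / ?K) \<beta> h (real (Lh E) / ?O)"
    unfolding witness_rank_le_def
  proof (intro exI[of _ "Amat E Ms h"] conjI ballI)
    fix M M' assume M: "M \<in> models E" and M': "M' \<in> models E"
    show "1 / ?K * bellman_err E Ms M M' h \<le> Amat E Ms h M M'"
      by (rule bellman_le_A[OF v ms M' hh])
    show "Amat E Ms h M M' \<le> witness_misfit E Ms M M' h"
      by (rule A_le_W[OF v ms M'])
  next
    show "rank_le (Amat E Ms h) (models E) \<beta> (real (Lh E) / ?O)"
      unfolding rank_le_def
    proof (intro exI[of _ k] conjI)
      show "real k \<le> real (Lh E) / ?O" using kO Opos by (simp add: field_simps)
      show "beta_factorization (Amat E Ms h) (models E) k \<beta>"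
      proof -
        have eqA: "Amat E Ms h M M' = (\<Sum>j<k. wt E Ms M h (enum j) * Dj E Ms h M' (enum j))" for M M'
          unfolding Amat_def using sum.reindex_bij_betw[OF enum, of "\<lambda>j. wt E Ms M h j * Dj E Ms h M' j"]
          by (simp add: atLeast0LessThan)
        have bnd: "sqrt (\<Sum>j<k. (wt E Ms M h (enum j))\<^sup>2) * sqrt (\<Sum>j<k. (Dj E Ms h M' (enum j))\<^sup>2) \<le> \<beta>" for M M'
        proof -
          have u: "sqrt (\<Sum>j<k. (wt E Ms M h (enum j))\<^sup>2) \<le> sqrt (real k) * (1 / ?K)"
            by (rule sqrt_sum_bound) (use wt_bounds[OF v] in auto)
          have w: "sqrt (\<Sum>j<k. (Dj E Ms h M' (enum j))\<^sup>2) \<le> sqrt (real k) * ?O"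
            by (rule sqrt_sum_bound) (use Dj_bounds in auto)
          have "sqrt (\<Sum>j<k. (wt E Ms M h (enum j))\<^sup>2) * sqrt (\<Sum>j<k. (Dj E Ms h M' (enum j))\<^sup>2)
              \<le> (sqrt (real k) * (1 / ?K)) * (sqrt (real k) * ?O)"
            by (rule mult_mono[OF u w]) (use Kpos Opos in \<open>auto intro: sum_nonneg\<close>)
          also have "\<dots> = \<beta>" unfolding \<beta>_def using Kpos by (simp add: field_simps)
          finally show ?thesis .
        qed
        show ?thesis unfolding beta_factorization_def
          by (rule exI[of _ "\<lambda>M n. wt E Ms M h (enum n)"], rule exI[of _ "\<lambda>M' n. Dj E Ms h M' (enum n)"])
             (use eqA bnd in simp)
      qed
    qed
  qed
  ultimately show "\<exists>\<beta>. \<beta> \<le> 1 * real (Ltot E) / ?K \<and> witness_rank_le E Ms (1 / ?K) \<beta> h (real (Lh E) / ?O)"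
    by blast
qed

end
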